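(* Let $G=(V,E)$ be an undirected graph, $r_\alpha$ a nonnegative integer and $\alpha\colon V\to\{0,1\}$. There is an $r_\alpha$-biased $(1,1)$-dissolution for $(G,\alpha)$ if and only if $G$ has a perfect matching of total weight at least $r_\alpha$ with respect to the edge weights $w(\{x,y\}):=1$ if $\alpha(x)=\alpha(y)=1$ and $w(\{x,y\}):=0$ otherwise.
   Context: For $V'\subseteq V(G)$ let $Z(V',G):=\{(x,y)\mid x\in V',\ y\in V(G)\setminus V',\ \{x,y\}\in E(G)\}$. For positive integers $s,\Delta_s$, an $(s,\Delta_s)$-dissolution for $G$ is a pair $(D,z)$ with $D\subset V(G)$ and $z\colon Z(D,G)\to\{0,\dots,s\}$ such that (a) each $v'\in D$ satisfies $\sum_{(v',v)\in Z(D,G)} z(v',v)=s$, and (b) each $v\in V(G)\setminus D$ satisfies $\sum_{(v',v)\in Z(D,G)} z(v',v)=\Delta_s$. Given $\alpha\colon V(G)\to\{0,\dots,s\}$ and an integer $r_\alpha$, a tuple $(D,z,z_\alpha,R_\alpha)$ is an $r_\alpha$-biased $(s,\Delta_s)$-dissolution for $(G,\alpha)$ if $(D,z)$ is an $(s,\Delta_s)$-dissolution, $z_\alpha\colon Z(D,G)\to\{0,\dots,s\}$, $R_\alpha\subseteq V(G)\setminus D$ with $|R_\alpha|=r_\alpha$, and (c) $z_\alpha(v',v)\le z(v',v)$ for all $(v',v)\in Z(D,G)$; (d) each $v'\in D$ satisfies $\sum_{(v',v)\in Z(D,G)} z_\alpha(v',v)=\alpha(v')$; (e) each $v\in R_\alpha$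 satisfies $\alpha(v)+\sum_{(v',v)\in Z(D,G)} z_\alpha(v',v)>(s+\Delta_s)/2$. *)

theory Defs
  imports Complex_Main
begin

definition graph :: "'a set \<Rightarrow> 'a set set \<Rightarrow> bool" where
  "graph V E \<longleftrightarrow> finite V \<and> (\<forall>e\<in>E. \<exists>x y. x \<noteq> y \<and> x \<in> V \<and> y \<in> V \<and> e = {x, y})"

definition Zset :: "'a set \<Rightarrow> 'a set set \<Rightarrow> 'a set \<Rightarrow> ('a \<times> 'a) set" where
  "Zset V E D = {(x, y). x \<in> D \<and> y \<in> V - D \<and> {x, y} \<in> E}"

definition dissolution ::
  "'a set \<Rightarrow> 'a set set \<Rightarrow> nat \<Rightarrow> nat \<Rightarrow> 'a set \<Rightarrow> ('a \<times> 'a \<Rightarrow> nat) \<Rightarrow> bool" where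
  "dissolution V E s \<Delta> D z \<longleftrightarrow>
     D \<subseteq> V \<and>
     (\<forall>p\<in>Zset V E D. z p \<le> s) \<and>
     (\<forall>v'\<in>D. (\<Sum>v\<in>{v. (v', v) \<in> Zset V E D}. z (v', v)) = s) \<and>
     (\<forall>v\<in>V - D. (\<Sum>v'\<in>{v'. (v', v) \<in> Zset V E D}. z (v', v)) = \<Delta>)"

definition biased_dissolution ::
  "'a set \<Rightarrow> 'a set set \<Rightarrow> nat \<Rightarrow> nat \<Rightarrow> ('a \<Rightarrow> nat) \<Rightarrow> nat \<Rightarrow>
   'a set \<Rightarrow> ('a \<times> 'a \<Rightarrow> nat) \<Rightarrow> ('a \<times> 'a \<Rightarrow> nat) \<Rightarrow> 'a set \<Rightarrow> bool" where
  "biased_dissolution V E s \<Delta> \<alpha> r\<alpha> D z z\<alpha> R\<alpha> \<longleftrightarrow>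
     dissolution V E s \<Delta> D z \<and>
     (\<forall>p\<in>Zset V E D. z\<alpha> p \<le> s) \<and>
     R\<alpha> \<subseteq> V - D \<and> card R\<alpha> = r\<alpha> \<and>
     (\<forall>p\<in>Zset V E D. z\<alpha> p \<le> z p) \<and>
     (\<forall>v'\<in>D. (\<Sum>v\<in>{v. (v', v) \<in> Zset V E D}. z\<alpha> (v', v)) = \<alpha> v') \<and>
     (\<forall>v\<in>R\<alpha>. real (\<alpha> v + (\<Sum>v'\<in>{v'. (v', v) \<in> Zset V E D}. z\<alpha> (v', v)))
                 > (real s + real \<Delta>) / 2)"

definition perfect_matching :: "'a set \<Rightarrow> 'a set set \<Rightarrow> 'a set set \<Rightarrow> bool" where
  "perfect_matching V E M \<longleftrightarrow>
     M \<subseteq> E \<and> (\<forall>e1\<in>M. \<forall>e2\<in>M. e1 \<noteq> e2 \<longrightarrow> e1 \<inter> e2 = {}) \<and> (\<forall>v\<in>V. \<exists>e\<in>M. v \<in> e)"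

definition edge_weight :: "('a \<Rightarrow> nat) \<Rightarrow> 'a set \<Rightarrow> nat" where
  "edge_weight \<alpha> e = (if \<exists>x y. e = {x, y} \<and> \<alpha> x = 1 \<and> \<alpha> y = 1 then 1 else 0)"

end

theory Submission
  imports Defs
begin

lemma sum_single_nz:
  fixes f :: "'b \<Rightarrow> nat"
  assumes "finite S" "b0 \<in> S" "\<forall>b\<in>S. b \<noteq> b0 \<longrightarrow> f b = 0"
  shows "sum f S = f b0"
proof -
  have "sum f S = f b0 + sum f (S - {b0})" using assms by (simp add: sum.remove)
  also have "sum f (S - {b0}) = 0" using assms by (intro sum.neutral) auto
  finally show ?thesis by simp
qed

lemma sum_one_two:
  fixes f :: "'b \<Rightarrow> nat"
  assumes "finite S" "sum f S = 1" "b \<in> S" "d \<in> S" "b \<noteq> d" "f b \<ge> 1" "f d \<ge> 1"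
  shows False
proof -
  have "sum f {b, d} \<le> sum f S" using assms by (intro sum_mono2) auto
  moreover have "sum f {b,d} = f b + f d" using assms by simp
  ultimately show False using assms by linarith
qed

lemma sum_one_ex:
  fixes f :: "'b \<Rightarrow> nat"
  assumes "sum f S = 1" shows "\<exists>x\<in>S. f x \<noteq> 0"
proof (rule ccontr)
  assume "\<not> ?thesis"
  then have "sum f S = 0" by (intro sum.neutral) auto
  with assms show False by simp
qed

lemma ew1: "edge_weight \<alpha> e = 1 \<Longrightarrow> \<exists>x y. e = {x, y} \<and> \<alpha> x = 1 \<and> \<alpha> y = 1"
  unfolding edge_weight_def by (cases "\<exists>x y. e = {x, y} \<and> \<alpha> x = 1 \<and> \<alpha> y = 1") (simp_all only: if_True if_False zero_neq_one)

lemma half_two: "(1 + 1) / 2 < real (t::nat) \<Longrightarrow> 2 \<le> t"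
  by simp

theorem lemma3:
  fixes V :: "'a set" and E :: "'a set set" and \<alpha> :: "'a \<Rightarrow> nat" and r\<alpha> :: nat
  assumes "graph V E"
    and "\<forall>v\<in>V. \<alpha> v \<le> 1"
  shows "(\<exists>D z z\<alpha> R\<alpha>. biased_dissolution V E 1 1 \<alpha> r\<alpha> D z z\<alpha> R\<alpha>) \<longleftrightarrow>
         (\<exists>M. perfect_matching V E M \<and> (\<Sum>e\<in>M. edge_weight \<alpha> e) \<ge> r\<alpha>)"
proof -
  have G: "finite V \<and> (\<forall>e\<in>E. \<exists>x y. x \<noteq> y \<and> x \<in> V \<and> y \<in> V \<and> e = {x, y})"
    using assms(1) unfolding graph_def .
  have finV: "finite V" using G by (rule conjunct1)
  have EV: "\<forall>e\<in>E. \<exists>x y. x \<noteq> y \<and> x \<in> V \<and> y \<in> V \<and> e = {x, y}" using G by (rule conjunct2)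
  have finE: "finite E"
  proof -
    have "E \<subseteq> Pow V"
    proof
      fix e assume "e \<in> E"
      then obtain x y where "x \<in> V" "y \<in> V" "e = {x, y}" using EV by blast
      then show "e \<in> Pow V" by simp
    qed
    thus ?thesis using finV by (simp add: finite_subset)
  qed
  show ?thesis
  proof
    assume "\<exists>D z z\<alpha> R\<alpha>. biased_dissolution V E 1 1 \<alpha> r\<alpha> D z z\<alpha> R\<alpha>"
    then obtain D z z\<alpha> R\<alpha> where B: "biased_dissolution V E 1 1 \<alpha> r\<alpha> D z z\<alpha> R\<alpha>" by blast
    define Z where "Z = Zset V E D"
    have Zm: "\<And>a b. (a,b) \<in> Z \<longleftrightarrow> a \<in> D \<and> b \<in> V \<and> b \<notin> D \<and> {a,b} \<in> E"
      by (auto simp: Z_def Zset_def)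
    have DV: "D \<subseteq> V" using B by (simp add: biased_dissolution_def dissolution_def)
    have zle: "\<And>p. p \<in> Z \<Longrightarrow> z p \<le> 1" using B by (simp add: biased_dissolution_def dissolution_def Z_def)
    have zale: "\<And>p. p \<in> Z \<Longrightarrow> z\<alpha> p \<le> z p" using B by (simp add: biased_dissolution_def Z_def)
    have row: "\<And>a. a \<in> D \<Longrightarrow> (\<Sum>v\<in>{v. (a, v) \<in> Z}. z (a, v)) = 1"
      using B by (simp add: biased_dissolution_def dissolution_def Z_def)
    have col: "\<And>v. v \<in> V - D \<Longrightarrow> (\<Sum>a\<in>{a. (a, v) \<in> Z}. z (a, v)) = 1"
      using B by (simp add: biased_dissolution_def dissolution_def Z_def)
    have rowa: "\<And>a. a \<in> D \<Longrightarrow> (\<Sum>v\<in>{v. (a, v) \<in> Z}. z\<alpha> (a, v)) = \<alpha> a"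
      using B by (simp add: biased_dissolution_def Z_def)
    have RD: "R\<alpha> \<subseteq> V - D" and cR: "card R\<alpha> = r\<alpha>"
      using B by (simp_all add: biased_dissolution_def)
    have Rc: "\<And>v. v \<in> R\<alpha> \<Longrightarrow> real (\<alpha> v + (\<Sum>a\<in>{a. (a, v) \<in> Z}. z\<alpha> (a, v))) > (1 + 1) / 2"
      using B by (simp add: biased_dissolution_def Z_def)
    have finr: "\<And>a. finite {v. (a, v) \<in> Z}"
      by (rule finite_subset[OF _ finV]) (auto simp: Zm)
    have finc: "\<And>v. finite {a. (a, v) \<in> Z}"
      by (rule finite_subset[OF _ finV]) (auto simp: Zm DV[THEN subsetD])
    have U1: "b = d" if "(a,b) \<in> Z" "z (a,b) = 1" "(a,d) \<in> Z" "z (a,d) = 1" for a b d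
    proof (rule ccontr)
      assume "b \<noteq> d"
      have "a \<in> D" using that Zm by blast
      from sum_one_two[OF finr row[OF this], of b d] that \<open>b \<noteq> d\<close> show False by auto
    qed
    have U2: "a = c" if "(a,b) \<in> Z" "z (a,b) = 1" "(c,b) \<in> Z" "z (c,b) = 1" for a b c
    proof (rule ccontr)
      assume "a \<noteq> c"
      have "b \<in> V - D" using that Zm by blast
      from sum_one_two[OF finc col[OF this], of a c] that \<open>a \<noteq> c\<close> show False by auto
    qed
    define M where "M = {{a,b} | a b. (a,b) \<in> Z \<and> z (a,b) = 1}"
    have ME: "M \<subseteq> E" using Zm by (auto simp: M_def)
    have finM: "finite M" using ME finE finite_subset by blast
    have disj: "\<forall>e1\<in>M. \<forall>e2\<in>M. e1 \<noteq> e2 \<longrightarrow> e1 \<inter> e2 = {}"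
    proof (intro ballI impI)
      fix e1 e2 assume "e1 \<in> M" "e2 \<in> M" "e1 \<noteq> e2"
      then obtain a b c d where e: "e1 = {a,b}" "(a,b) \<in> Z" "z (a,b) = 1"
        "e2 = {c,d}" "(c,d) \<in> Z" "z (c,d) = 1" by (auto simp: M_def)
      have m: "a \<in> D" "b \<notin> D" "c \<in> D" "d \<notin> D" using e Zm by blast+
      show "e1 \<inter> e2 = {}"
      proof (rule ccontr)
        assume "e1 \<inter> e2 \<noteq> {}"
        then have "a = c \<or> b = d" using e m by auto
        then show False
        proof
          assume "a = c" then have "b = d" using U1 e by blast
          then show False using \<open>a = c\<close> e \<open>e1 \<noteq> e2\<close> by simp
        next
          assume "b = d" then have "a = c" using U2 e by blast
          then show False using \<open>b = d\<close> e \<open>e1 \<noteq> e2\<close> by simp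
        qed
      qed
    qed
    have cover: "\<forall>v\<in>V. \<exists>e\<in>M. v \<in> e"
    proof
      fix v assume "v \<in> V"
      show "\<exists>e\<in>M. v \<in> e"
      proof (cases "v \<in> D")
        case True
        from sum_one_ex[OF row[OF True]] obtain b where "(v,b) \<in> Z" "z (v,b) \<noteq> 0" by auto
        moreover then have "z (v,b) = 1" using zle by fastforce
        ultimately show ?thesis unfolding M_def by blast
      next
        case False
        with \<open>v \<in> V\<close> have "v \<in> V - D" by blast
        from sum_one_ex[OF col[OF this]] obtain a where "(a,v) \<in> Z" "z (a,v) \<noteq> 0" by auto
        moreover then have "z (a,v) = 1" using zle by fastforce
        ultimately show ?thesis unfolding M_def by blast
      qed
    qed
    have PM: "perfect_matching V E M" using ME disj cover by (simp add: perfect_matching_def)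
    have gex: "\<exists>a. (a,v) \<in> Z \<and> z (a,v) = 1 \<and> \<alpha> a = 1 \<and> \<alpha> v = 1" if "v \<in> R\<alpha>" for v
    proof -
      have vV: "v \<in> V - D" using that RD by blast
      let ?S = "\<Sum>a\<in>{a. (a, v) \<in> Z}. z\<alpha> (a, v)"
      have "\<alpha> v + ?S \<ge> 2" using Rc[OF that] by (rule half_two)
      moreover have "?S \<le> 1"
      proof -
        have "?S \<le> (\<Sum>a\<in>{a. (a, v) \<in> Z}. z (a, v))" by (rule sum_mono) (auto intro: zale)
        thus ?thesis using col[OF vV] by simp
      qed
      moreover have "\<alpha> v \<le> 1" using assms(2) vV by blast
      ultimately have av: "\<alpha> v = 1" and S1: "?S = 1" by linarith+
      from sum_one_ex[OF S1] obtain a where a: "(a,v) \<in> Z" "z\<alpha> (a,v) \<noteq> 0" by auto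
      have z1: "z (a,v) = 1" using zle[OF a(1)] zale[OF a(1)] a(2) by linarith
      have aD: "a \<in> D" using a Zm by blast
      have "z\<alpha> (a,v) \<le> (\<Sum>w\<in>{w. (a, w) \<in> Z}. z\<alpha> (a, w))"
        by (rule member_le_sum) (use a finr in auto)
      then have "\<alpha> a \<ge> 1" using rowa[OF aD] a(2) by linarith
      moreover have "\<alpha> a \<le> 1" using assms(2) aD DV by blast
      ultimately show ?thesis using a z1 av by auto
    qed
    then obtain g where g: "\<And>v. v \<in> R\<alpha> \<Longrightarrow> (g v, v) \<in> Z \<and> z (g v, v) = 1 \<and> \<alpha> (g v) = 1 \<and> \<alpha> v = 1"
      by metis
    define f where "f v = {g v, v}" for v
    define W where "W = {e\<in>M. edge_weight \<alpha> e = 1}"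
    have inj: "inj_on f R\<alpha>"
    proof (rule inj_onI)
      fix u v assume uv: "u \<in> R\<alpha>" "v \<in> R\<alpha>" "f u = f v"
      have "g u \<in> D" "g v \<in> D" "u \<notin> D" "v \<notin> D" using g[OF uv(1)] g[OF uv(2)] Zm by blast+
      then show "u = v" using uv(3) unfolding f_def by (metis doubleton_eq_iff)
    qed
    have fW: "f ` R\<alpha> \<subseteq> W"
    proof
      fix e assume "e \<in> f ` R\<alpha>"
      then obtain v where v: "v \<in> R\<alpha>" "e = {g v, v}" by (auto simp: f_def)
      have "e \<in> M" using g[OF v(1)] v(2) unfolding M_def by blast
      moreover have "edge_weight \<alpha> e = 1" using g[OF v(1)] v(2) unfolding edge_weight_def by auto
      ultimately show "e \<in> W" by (simp add: W_def)
    qed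
    have finW: "finite W" using finM by (simp add: W_def)
    have "r\<alpha> = card (f ` R\<alpha>)" using cR inj by (simp add: card_image)
    also have "\<dots> \<le> card W" using fW finW by (rule card_mono[rotated])
    also have "card W = (\<Sum>e\<in>W. edge_weight \<alpha> e)" by (simp add: W_def)
    also have "\<dots> \<le> (\<Sum>e\<in>M. edge_weight \<alpha> e)" using finM by (intro sum_mono2) (auto simp: W_def)
    finally show "\<exists>M. perfect_matching V E M \<and> (\<Sum>e\<in>M. edge_weight \<alpha> e) \<ge> r\<alpha>" using PM by blast
  next
    assume "\<exists>M. perfect_matching V E M \<and> (\<Sum>e\<in>M. edge_weight \<alpha> e) \<ge> r\<alpha>"
    then obtain M where PM: "perfect_matching V E M" and wM: "(\<Sum>e\<in>M. edge_weight \<alpha> e) \<ge> r\<alpha>" by blast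
    have ME: "M \<subseteq> E" and disj: "\<And>e1 e2. e1 \<in> M \<Longrightarrow> e2 \<in> M \<Longrightarrow> e1 \<noteq> e2 \<Longrightarrow> e1 \<inter> e2 = {}"
      and cover: "\<And>v. v \<in> V \<Longrightarrow> \<exists>e\<in>M. v \<in> e"
      using PM by (auto simp: perfect_matching_def)
    have finM: "finite M" using ME finE finite_subset by blast
    have same: "e1 = e2" if "e1 \<in> M" "e2 \<in> M" "x \<in> e1" "x \<in> e2" for e1 e2 x
      using disj[OF that(1,2)] that(3,4) by blast
    define h where "h e = (SOME x. x \<in> e)" for e :: "'a set"
    define oth where "oth e = (SOME y. y \<in> e \<and> y \<noteq> h e)" for e :: "'a set"
    have ho: "h e \<in> e \<and> oth e \<in> e \<and> oth e \<noteq> h e \<and> h e \<in> V \<and> oth e \<in> V \<and> e = {h e, oth e}" if "e \<in> M" for e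
    proof -
      have eE: "e \<in> E" using ME that by (rule subsetD)
      have "\<exists>x y. x \<noteq> y \<and> x \<in> V \<and> y \<in> V \<and> e = {x, y}" using EV eE by (rule bspec)
      then obtain x y where xy0: "x \<noteq> y \<and> x \<in> V \<and> y \<in> V \<and> e = {x,y}" by (elim exE)
      then have xy: "x \<noteq> y" "x \<in> V" "y \<in> V" "e = {x,y}" by simp_all
      have xe: "x \<in> e" "y \<in> e" using xy(4) by blast+
      have he: "h e \<in> e" unfolding h_def by (rule someI[of _ x]) (rule xe(1))
      have hxy: "h e = x \<or> h e = y" using he xy(4) by blast
      have "\<exists>y. y \<in> e \<and> y \<noteq> h e"
      proof (cases "h e = x")
        case True then show ?thesis using xe xy(1) by blast
      next
        case False then show ?thesis using xe by blast
      qed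
      then have oe: "oth e \<in> e \<and> oth e \<noteq> h e" unfolding oth_def by (rule someI_ex)
      have oxy: "oth e = x \<or> oth e = y" using oe xy(4) by blast
      have "(h e = x \<and> oth e = y) \<or> (h e = y \<and> oth e = x)" using hxy oxy oe by blast
      then have "e = {h e, oth e}" using xy(4) by (auto simp: insert_commute)
      moreover have "h e \<in> V" using hxy xy(2,3) by blast
      moreover have "oth e \<in> V" using oxy xy(2,3) by blast
      ultimately show ?thesis using he oe by blast
    qed
    define W where "W = {e\<in>M. edge_weight \<alpha> e = 1}"
    have finW: "finite W" using finM by (simp add: W_def)
    have wle: "edge_weight \<alpha> e \<le> 1" for e by (simp add: edge_weight_def)
    have "(\<Sum>e\<in>M. edge_weight \<alpha> e) = (\<Sum>e\<in>W. edge_weight \<alpha> e)"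
    proof (rule sum.mono_neutral_right[OF finM])
      show "W \<subseteq> M" by (auto simp: W_def)
      show "\<forall>e\<in>M - W. edge_weight \<alpha> e = 0"
      proof
        fix e assume "e \<in> M - W"
        then have "edge_weight \<alpha> e \<noteq> 1" by (simp add: W_def)
        then show "edge_weight \<alpha> e = 0" unfolding edge_weight_def by presburger
      qed
    qed
    also have "\<dots> = card W" by (simp add: W_def)
    finally have "r\<alpha> \<le> card W" using wM by simp
    then obtain W' where W': "W' \<subseteq> W" "card W' = r\<alpha>" by (meson obtain_subset_with_card_n)
    define D where "D = h ` M"
    define R where "R = oth ` W'"
    define z where "z p = (if {fst p, snd p} \<in> M then 1 else 0::nat)" for p
    define za where "za p = (if {fst p, snd p} \<in> M then \<alpha> (fst p) else 0)" for p
    define Z where "Z = Zset V E D"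
    have Zm: "\<And>a b. (a,b) \<in> Z \<longleftrightarrow> a \<in> D \<and> b \<in> V \<and> b \<notin> D \<and> {a,b} \<in> E"
      by (auto simp: Z_def Zset_def)
    have DV: "D \<subseteq> V" using ho by (auto simp: D_def)
    have othD: "oth e \<notin> D" if "e \<in> M" for e
    proof
      assume "oth e \<in> D"
      then obtain e' where e': "e' \<in> M" "oth e = h e'" by (auto simp: D_def)
      then have "e' = e" using same[OF e'(1) that, of "oth e"] ho[OF e'(1)] ho[OF that] by auto
      then show False using e' ho[OF that] by simp
    qed
    have finr: "\<And>a. finite {v. (a, v) \<in> Z}"
      by (rule finite_subset[OF _ finV]) (auto simp: Zm)
    have finc: "\<And>v. finite {a. (a, v) \<in> Z}"
      by (rule finite_subset[OF _ finV]) (auto simp: Zm DV[THEN subsetD])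
    have inZ: "(h e, oth e) \<in> Z" if "e \<in> M" for e
      using ho[OF that] othD[OF that] ME that by (auto simp: Zm D_def)
    have rowsum: "(\<Sum>v\<in>{v. (a, v) \<in> Z}. z (a, v)) = 1 \<and> (\<Sum>v\<in>{v. (a, v) \<in> Z}. za (a, v)) = \<alpha> a"
      if "a \<in> D" for a
    proof -
      obtain e where e: "e \<in> M" "a = h e" using \<open>a \<in> D\<close> unfolding D_def by (rule imageE)
      have o: "\<forall>b\<in>{v. (a, v) \<in> Z}. b \<noteq> oth e \<longrightarrow> z (a,b) = 0 \<and> za (a,b) = 0"
      proof (intro ballI impI)
        fix b assume b: "b \<in> {v. (a, v) \<in> Z}" "b \<noteq> oth e"
        show "z (a,b) = 0 \<and> za (a,b) = 0"
        proof (rule ccontr)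
          assume "\<not> ?thesis"
          then have ab: "{a,b} \<in> M" by (auto simp: z_def za_def split: if_splits)
          have "{a,b} = e" using same[OF ab e(1), of a] ho[OF e(1)] e by auto
          then have "b \<in> e" by auto
          moreover have "b \<noteq> h e" using b Zm e that by auto
          ultimately show False using ho[OF e(1)] b by auto
        qed
      qed
      have m: "oth e \<in> {v. (a, v) \<in> Z}" using inZ[OF e(1)] e by simp
      have ze: "{a, oth e} \<in> M" using ho[OF e(1)] e by auto
      have "(\<Sum>v\<in>{v. (a, v) \<in> Z}. z (a, v)) = z (a, oth e)"
        using sum_single_nz[OF finr m, of "\<lambda>v. z (a,v)"] o by auto
      moreover have "(\<Sum>v\<in>{v. (a, v) \<in> Z}. za (a, v)) = za (a, oth e)"
        using sum_single_nz[OF finr m, of "\<lambda>v. za (a,v)"] o by auto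
      ultimately show ?thesis using ze by (simp add: z_def za_def)
    qed
    have colsum: "(\<Sum>a\<in>{a. (a, v) \<in> Z}. z (a, v)) = 1 \<and> (\<exists>e\<in>M. v = oth e \<and>
                   (\<Sum>a\<in>{a. (a, v) \<in> Z}. za (a, v)) = \<alpha> (h e))"
      if vVD: "v \<in> V - D" for v
    proof -
      obtain e where e: "e \<in> M" "v \<in> e" using cover vVD by blast
      have ve: "v = oth e" using ho[OF e(1)] e that by (auto simp: D_def)
      have o: "\<forall>b\<in>{a. (a, v) \<in> Z}. b \<noteq> h e \<longrightarrow> z (b,v) = 0 \<and> za (b,v) = 0"
      proof (intro ballI impI)
        fix b assume b: "b \<in> {a. (a, v) \<in> Z}" "b \<noteq> h e"
        show "z (b,v) = 0 \<and> za (b,v) = 0"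
        proof (rule ccontr)
          assume "\<not> ?thesis"
          then have ab: "{b,v} \<in> M" by (auto simp: z_def za_def split: if_splits)
          have "{b,v} = e" using same[OF ab e(1), of v] e by auto
          then have "b \<in> e" by auto
          moreover have "b \<noteq> v" using b Zm by auto
          ultimately show False using ho[OF e(1)] b ve by auto
        qed
      qed
      have m: "h e \<in> {a. (a, v) \<in> Z}" using inZ[OF e(1)] ve by simp
      have ze: "{h e, v} \<in> M" using ho[OF e(1)] e ve by auto
      have "(\<Sum>a\<in>{a. (a, v) \<in> Z}. z (a, v)) = z (h e, v)"
        using sum_single_nz[OF finc m, of "\<lambda>a. z (a,v)"] o by auto
      moreover have "(\<Sum>a\<in>{a. (a, v) \<in> Z}. za (a, v)) = za (h e, v)"
        using sum_single_nz[OF finc m, of "\<lambda>a. za (a,v)"] o by auto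
      ultimately show ?thesis using ze ve e(1) by (auto simp: z_def za_def)
    qed
    have dis: "dissolution V E 1 1 D z"
      unfolding dissolution_def using DV rowsum colsum by (auto simp: z_def Z_def)
    have RVD: "R \<subseteq> V - D" using W' ho othD by (auto simp: R_def W_def)
    have injo: "inj_on oth M"
    proof (rule inj_onI)
      fix e1 e2 assume A: "e1 \<in> M" "e2 \<in> M" "oth e1 = oth e2"
      have "oth e1 \<in> e1" using ho[OF A(1)] by blast
      moreover have "oth e1 \<in> e2" using ho[OF A(2)] A(3) by simp
      ultimately show "e1 = e2" by (rule same[OF A(1) A(2)])
    qed
    have W'M: "W' \<subseteq> M" using W' by (auto simp: W_def)
    have cardR: "card R = r\<alpha>" unfolding R_def
      using card_image[OF inj_on_subset[OF injo W'M]] W'(2) by simp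
    have all1: "\<alpha> x = 1" if eW: "e \<in> W" and xe: "x \<in> e" for e x
    proof -
      have "edge_weight \<alpha> e = 1" using eW by (simp add: W_def)
      then have "\<exists>x y. e = {x, y} \<and> \<alpha> x = 1 \<and> \<alpha> y = 1"
        using ew1 by blast
      then obtain a b where ab: "e = {a, b}" "\<alpha> a = 1" "\<alpha> b = 1" by blast
      have "x = a \<or> x = b" using xe ab(1) by blast
      then show ?thesis using ab by blast
    qed
    have Rcond: "real (\<alpha> v + (\<Sum>a\<in>{a. (a, v) \<in> Z}. za (a, v))) > (1 + 1) / 2" if vR: "v \<in> R" for v
    proof -
      obtain e0 where e0: "e0 \<in> W'" "v = oth e0" using vR unfolding R_def by (rule imageE)
      have e0W: "e0 \<in> W" using e0 W' by blast
      have e0M: "e0 \<in> M" using e0W by (simp add: W_def)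
      have vV: "v \<in> V - D" using vR RVD by blast
      obtain e where e: "e \<in> M" "v = oth e" "(\<Sum>a\<in>{a. (a, v) \<in> Z}. za (a, v)) = \<alpha> (h e)"
        using colsum[OF vV] by blast
      have "v \<in> e" using ho[OF e(1)] e(2) by simp
      moreover have "v \<in> e0" using ho[OF e0M] e0(2) by simp
      ultimately have ee: "e = e0" by (rule same[OF e(1) e0M])
      have "h e \<in> e0" using ho[OF e(1)] ee by simp
      then have "\<alpha> (h e) = 1" by (rule all1[OF e0W])
      moreover have "\<alpha> v = 1" using \<open>v \<in> e0\<close> by (rule all1[OF e0W])
      ultimately show ?thesis using e(3) by simp
    qed
    have zale1: "za p \<le> 1" and zaz: "za p \<le> z p" if pZ: "p \<in> Z" for p
    proof -
      obtain a b where p: "p = (a,b)" by (cases p)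
      have "a \<in> V" using pZ p DV Zm by blast
      then have "\<alpha> a \<le> 1" using assms(2) by blast
      then show "za p \<le> 1" "za p \<le> z p" unfolding p za_def z_def by simp_all
    qed
    have "biased_dissolution V E 1 1 \<alpha> r\<alpha> D z za R"
      unfolding biased_dissolution_def
    proof (intro conjI ballI)
      show "dissolution V E 1 1 D z" by (rule dis)
      show "R \<subseteq> V - D" by (rule RVD)
      show "card R = r\<alpha>" by (rule cardR)
    next
      fix p assume "p \<in> Zset V E D" then show "za p \<le> 1" using zale1 by (simp add: Z_def)
    next
      fix p assume "p \<in> Zset V E D" then show "za p \<le> z p" using zaz by (simp add: Z_def)
    next
      fix v' assume "v' \<in> D"
      then show "(\<Sum>v\<in>{v. (v', v) \<in> Zset V E D}. za (v', v)) = \<alpha> v'"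
        using rowsum by (simp add: Z_def)
    next
      fix v assume "v \<in> R"
      then show "real (\<alpha> v + (\<Sum>v'\<in>{v'. (v', v) \<in> Zset V E D}. za (v', v))) > (real 1 + real 1) / 2"
        using Rcond by (simp add: Z_def)
    qed
    then show "\<exists>D z z\<alpha> R\<alpha>. biased_dissolution V E 1 1 \<alpha> r\<alpha> D z z\<alpha> R\<alpha>" by blast
  qed
qed

end
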